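(* Let $G$ be a graph with a partition $V(G)=A\cup B$ of its vertices such that every vertex of $G$ has at most $\Delta(G)/100$ neighbours in $B$, and $A$ is an independent set. Then the edges of $G$ can be decomposed into $\lceil \Delta(G)/2\rceil$ linear forests.
   Context: $\Delta(G)$ is the maximum degree of $G$. A linear forest is a vertex-disjoint union of paths. A decomposition of the edges into linear forests means edge-disjoint linear forests whose union is $E(G)$. *)

theory Defs
  imports Complex_Main
begin

definition simple_graph :: "'a set \<Rightarrow> 'a set set \<Rightarrow> bool" where
  "simple_graph V E \<longleftrightarrow> finite V \<and>
     (\<forall>e\<in>E. \<exists>u v. e = {u, v} \<and> u \<noteq> v \<and> u \<in> V \<and> v \<in> V)"

definition degree :: "'a set set \<Rightarrow> 'a \<Rightarrow> nat" where
  "degree E v = card {e \<in> E. v \<in> e}"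

definition max_degree :: "'a set \<Rightarrow> 'a set set \<Rightarrow> nat" where
  "max_degree V E = Max (insert 0 (degree E ` V))"

definition nbrs_in :: "'a set set \<Rightarrow> 'a set \<Rightarrow> 'a \<Rightarrow> 'a set" where
  "nbrs_in E S v = {u \<in> S. {u, v} \<in> E}"

definition independent_set :: "'a set set \<Rightarrow> 'a set \<Rightarrow> bool" where
  "independent_set E S \<longleftrightarrow> (\<forall>u\<in>S. \<forall>v\<in>S. {u, v} \<notin> E)"

definition path_edges :: "'a list \<Rightarrow> 'a set set" where
  "path_edges xs = {{xs ! i, xs ! Suc i} | i. Suc i < length xs}"

definition linear_forest :: "'a set set \<Rightarrow> bool" where
  "linear_forest F \<longleftrightarrow> (\<exists>Ps. finite Ps \<and> (\<forall>p\<in>Ps. distinct p) \<and>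
      (\<forall>p\<in>Ps. \<forall>q\<in>Ps. p \<noteq> q \<longrightarrow> set p \<inter> set q = {}) \<and>
      F = (\<Union>p\<in>Ps. path_edges p))"

definition lf_decomposable :: "'a set set \<Rightarrow> nat \<Rightarrow> bool" where
  "lf_decomposable E k \<longleftrightarrow> (\<exists>c :: 'a set \<Rightarrow> nat. (\<forall>e\<in>E. c e < k) \<and>
      (\<forall>i<k. linear_forest {e \<in> E. c e = i}))"

end

theory Submission
  imports Defs
begin


lemma avail_col0:
  assumes "finite S" "finite U" "card S < card U"
  shows "\<exists>u\<in>U. u \<notin> f ` S"
proof (rule ccontr)
  assume "\<not> ?thesis"
  hence "U \<subseteq> f ` S" by auto
  hence "card U \<le> card (f ` S)" using assms by (simp add: card_mono)
  also have "\<dots> \<le> card S" by (rule card_image_le[OF assms(1)])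
  finally show False using assms(3) by simp
qed

lemma bip_list_col:
  fixes F :: "('x \<times> 'y) set" and L :: "'x \<Rightarrow> nat set" and N :: "nat set"
  assumes "finite F" "finite N" "\<forall>x. N \<subseteq> L x" "\<forall>x. finite (L x)"
    "\<forall>x. card {y. (x,y) \<in> F} \<le> card (L x)"
    "\<forall>y. card {x. (x,y) \<in> F} \<le> card N"
  shows "\<exists>c. (\<forall>x y. (x,y) \<in> F \<longrightarrow> c (x,y) \<in> L x) \<and>
             (\<forall>x y y'. (x,y) \<in> F \<longrightarrow> (x,y') \<in> F \<longrightarrow> c (x,y) = c (x,y') \<longrightarrow> y = y') \<and>
             (\<forall>x x' y. (x,y) \<in> F \<longrightarrow> (x',y) \<in> F \<longrightarrow> c (x,y) = c (x',y) \<longrightarrow> x = x')"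
  using assms
proof (induction F rule: finite_induct)
  case empty thus ?case by auto
next
  case (insert e F)
  obtain x0 y0 where e: "e = (x0,y0)" by force
  have finX: "finite {y. (x,y) \<in> G}" if "finite G" for x and G :: "('x \<times> 'y) set"
    by (rule finite_subset[of _ "snd ` G"]) (use that in force)+
  have finY: "finite {x. (x,y) \<in> G}" if "finite G" for y and G :: "('x \<times> 'y) set"
    by (rule finite_subset[of _ "fst ` G"]) (use that in force)+
  have "\<forall>x. card {y. (x,y) \<in> F} \<le> card (L x)"
  proof
    fix x
    have "card {y. (x,y) \<in> F} \<le> card {y. (x,y) \<in> insert e F}"
      by (intro card_mono finX) (use insert in auto)
    thus "card {y. (x,y) \<in> F} \<le> card (L x)" using insert.prems(4) by (meson order_trans)
  qed
  moreover have "\<forall>y. card {x. (x,y) \<in> F} \<le> card N"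
  proof
    fix y
    have "card {x. (x,y) \<in> F} \<le> card {x. (x,y) \<in> insert e F}"
      by (intro card_mono finY) (use insert in auto)
    thus "card {x. (x,y) \<in> F} \<le> card N" using insert.prems(5) by (meson order_trans)
  qed
  ultimately obtain c where cL: "\<forall>x y. (x,y) \<in> F \<longrightarrow> c (x,y) \<in> L x"
    and cX: "\<forall>x y y'. (x,y) \<in> F \<longrightarrow> (x,y') \<in> F \<longrightarrow> c (x,y) = c (x,y') \<longrightarrow> y = y'"
    and cY: "\<forall>x x' y. (x,y) \<in> F \<longrightarrow> (x',y) \<in> F \<longrightarrow> c (x,y) = c (x',y) \<longrightarrow> x = x'"
    using insert by blast
  have "{y. (x0,y) \<in> F} \<subset> {y. (x0,y) \<in> insert e F}" using insert(2) e by auto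
  hence "card {y. (x0,y) \<in> F} < card {y. (x0,y) \<in> insert e F}"
    by (intro psubset_card_mono finX) (use insert in auto)
  hence lt1: "card {y. (x0,y) \<in> F} < card (L x0)" using insert.prems(4) by (meson order_less_le_trans)
  obtain \<beta> where b1: "\<beta> \<in> L x0" and b2: "\<forall>y. (x0,y) \<in> F \<longrightarrow> c (x0,y) \<noteq> \<beta>"
    using avail_col0[OF finX[OF insert(1)] _ lt1, of "\<lambda>y. c (x0,y)"] insert.prems(3) by blast
  have "{x. (x,y0) \<in> F} \<subset> {x. (x,y0) \<in> insert e F}" using insert(2) e by auto
  hence "card {x. (x,y0) \<in> F} < card {x. (x,y0) \<in> insert e F}"
    by (intro psubset_card_mono finY) (use insert in auto)
  hence lt2: "card {x. (x,y0) \<in> F} < card N" using insert.prems(5) by (meson order_less_le_trans)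
  obtain \<alpha> where a1: "\<alpha> \<in> N" and a2: "\<forall>x. (x,y0) \<in> F \<longrightarrow> c (x,y0) \<noteq> \<alpha>"
    using avail_col0[OF finY[OF insert(1)] _ lt2, of "\<lambda>x. c (x,y0)"] insert.prems(1) by blast
  define R where "R x x' \<longleftrightarrow> (\<exists>y. (x,y) \<in> F \<and> c (x,y) = \<alpha> \<and> (x',y) \<in> F \<and> c (x',y) = \<beta>)" for x x'
  define T where "T = {x. R\<^sup>*\<^sup>* x0 x}"
  define sw where "sw g = (if g = \<alpha> then \<beta> else if g = \<beta> then \<alpha> else g)" for g
  define c' where "c' p = (if p = (x0,y0) then \<alpha> else if p \<in> F \<and> fst p \<in> T \<and> c p \<in> {\<alpha>,\<beta>} then sw (c p) else c p)" for p
  have x0T: "x0 \<in> T" unfolding T_def by simp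
  have bck: "\<exists>x'. x' \<in> T \<and> (x',y) \<in> F \<and> c (x',y) = \<alpha>"
    if "x \<in> T" "(x,y) \<in> F" "c (x,y) = \<beta>" for x y
  proof -
    have "x \<noteq> x0" using that b2 by auto
    from \<open>x \<in> T\<close> have "R\<^sup>*\<^sup>* x0 x" by (simp add: T_def)
    then obtain x' where "R\<^sup>*\<^sup>* x0 x'" "R x' x" using \<open>x \<noteq> x0\<close>
      by (metis rtranclp.cases)
    then obtain y' where "(x',y') \<in> F" "c (x',y') = \<alpha>" "(x,y') \<in> F" "c (x,y') = \<beta>"
      by (auto simp: R_def)
    moreover have "y' = y" using cX that calculation by metis
    ultimately show ?thesis using \<open>R\<^sup>*\<^sup>* x0 x'\<close> by (auto simp: T_def)
  qed
  have fwd: "x' \<in> T" if "x \<in> T" "(x,y) \<in> F" "c (x,y) = \<alpha>" "(x',y) \<in> F" "c (x',y) = \<beta>" for x x' y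
  proof -
    have "R x x'" using that by (auto simp: R_def)
    thus ?thesis using that(1) by (auto simp: T_def)
  qed
  have hasb: "\<exists>y. (x,y) \<in> F \<and> c (x,y) = \<beta>" if "x \<in> T" "x \<noteq> x0" for x
  proof -
    from \<open>x \<in> T\<close> have "R\<^sup>*\<^sup>* x0 x" by (simp add: T_def)
    then obtain x' where "R x' x" using \<open>x \<noteq> x0\<close> by (metis rtranclp.cases)
    thus ?thesis by (auto simp: R_def)
  qed
  have eF: "(x0,y0) \<notin> F" using insert(2) e by simp
  have c'new: "c' (x0,y0) = \<alpha>" by (simp add: c'_def)
  have c'sw: "c' (x,y) = sw (c (x,y))" if "(x,y) \<in> F" "x \<in> T" "c (x,y) \<in> {\<alpha>,\<beta>}" for x y
    using that eF unfolding c'_def by auto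
  have c'old: "c' (x,y) = c (x,y)" if "(x,y) \<in> F" "\<not> (x \<in> T \<and> c (x,y) \<in> {\<alpha>,\<beta>})" for x y
    using that eF unfolding c'_def by auto
  have swa: "sw \<alpha> = \<beta>" by (simp add: sw_def)
  have swb: "sw \<beta> = \<alpha>" by (simp add: sw_def)
  have swinj: "sw g = sw h \<Longrightarrow> g = h" for g h by (auto simp: sw_def split: if_splits)
  have swin: "sw g \<in> {\<alpha>,\<beta>} \<longleftrightarrow> g \<in> {\<alpha>,\<beta>}" for g by (auto simp: sw_def)
  have swout: "g \<notin> {\<alpha>,\<beta>} \<Longrightarrow> sw g = g" for g by (auto simp: sw_def)
  show ?case
  proof (intro exI[of _ c'] conjI allI impI)
    fix x y assume xy: "(x,y) \<in> insert e F"
    show "c' (x,y) \<in> L x"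
    proof (cases "(x,y) = (x0,y0)")
      case True thus ?thesis using a1 insert.prems(2) c'new by auto
    next
      case False
      hence F: "(x,y) \<in> F" using xy e by auto
      show ?thesis
      proof (cases "x \<in> T \<and> c (x,y) \<in> {\<alpha>,\<beta>}")
        case False thus ?thesis using F cL c'old by simp
      next
        case True
        have bx: "\<beta> \<in> L x"
        proof (cases "x = x0")
          case True thus ?thesis using b1 by simp
        next
          case False thus ?thesis using hasb[of x] \<open>x \<in> T \<and> _\<close> cL by blast
        qed
        have "c' (x,y) = sw (c (x,y))" using c'sw True F by blast
        moreover have "sw (c (x,y)) \<in> {\<alpha>,\<beta>}" using swin True by blast
        ultimately show ?thesis using bx a1 insert.prems(2) by auto
      qed
    qed
  next
    fix x y y' assume xy: "(x,y) \<in> insert e F" and xy': "(x,y') \<in> insert e F"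
      and eq: "c' (x,y) = c' (x,y')"
    show "y = y'"
    proof (rule ccontr)
      assume ne: "y \<noteq> y'"
      have main: False if h: "(x0,y') \<in> F" "c' (x0,y') = \<alpha>" for y'
      proof (cases "c (x0,y') \<in> {\<alpha>,\<beta>}")
        case True
        hence ca: "c (x0,y') = \<alpha>" using b2 h by auto
        hence "\<alpha> \<noteq> \<beta>" using b2 h by auto
        have "c' (x0,y') = \<beta>" using c'sw[of x0 y'] h x0T ca swa by simp
        thus False using h(2) \<open>\<alpha> \<noteq> \<beta>\<close> by simp
      next
        case False
        hence "c' (x0,y') = c (x0,y')" using c'old h by blast
        thus False using False h by simp
      qed
      show False
      proof (cases "(x,y) = (x0,y0) \<or> (x,y') = (x0,y0)")
        case True
        thus False
        proof
          assume a: "(x,y) = (x0,y0)"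
          hence "(x0,y') \<in> F" "c' (x0,y') = \<alpha>" using xy' ne eq c'new e by auto
          thus False using main by blast
        next
          assume a: "(x,y') = (x0,y0)"
          hence "(x0,y) \<in> F" "c' (x0,y) = \<alpha>" using xy ne eq c'new e by auto
          thus False using main by blast
        qed
      next
        case False
        hence F: "(x,y) \<in> F" "(x,y') \<in> F" using xy xy' e by auto
        have dif: "c (x,y) \<noteq> c (x,y')" using cX F ne by blast
        show False
        proof (cases "x \<in> T")
          case True
          show False
          proof (cases "c (x,y) \<in> {\<alpha>,\<beta>}"; cases "c (x,y') \<in> {\<alpha>,\<beta>}")
            assume "c (x,y) \<in> {\<alpha>,\<beta>}" "c (x,y') \<in> {\<alpha>,\<beta>}"
            thus False using c'sw F True eq dif swinj by metis
          next
            assume "c (x,y) \<in> {\<alpha>,\<beta>}" "c (x,y') \<notin> {\<alpha>,\<beta>}"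
            thus False using c'sw c'old F True eq swin by metis
          next
            assume "c (x,y) \<notin> {\<alpha>,\<beta>}" "c (x,y') \<in> {\<alpha>,\<beta>}"
            thus False using c'sw c'old F True eq swin by metis
          next
            assume "c (x,y) \<notin> {\<alpha>,\<beta>}" "c (x,y') \<notin> {\<alpha>,\<beta>}"
            thus False using c'old F True eq dif by metis
          qed
        next
          case False
          thus False using c'old F eq dif by metis
        qed
      qed
    qed
  next
    fix x x' y assume xy: "(x,y) \<in> insert e F" and xy': "(x',y) \<in> insert e F"
      and eq: "c' (x,y) = c' (x',y)"
    show "x = x'"
    proof (rule ccontr)
      assume ne: "x \<noteq> x'"
      have main: False if h: "(x',y0) \<in> F" "c' (x',y0) = \<alpha>" for x'
      proof -
        have ca: "c (x',y0) \<noteq> \<alpha>" using a2 h by auto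
        show False
        proof (cases "x' \<in> T \<and> c (x',y0) = \<beta>")
          case True
          obtain x'' where "(x'',y0) \<in> F" "c (x'',y0) = \<alpha>" using bck[of x' y0] True h(1) by blast
          thus False using a2 by auto
        next
          case False
          hence "\<not> (x' \<in> T \<and> c (x',y0) \<in> {\<alpha>,\<beta>})" using ca by auto
          hence "c' (x',y0) = c (x',y0)" using c'old h by blast
          thus False using ca h by simp
        qed
      qed
      show False
      proof (cases "(x,y) = (x0,y0) \<or> (x',y) = (x0,y0)")
        case True
        thus False
        proof
          assume a: "(x,y) = (x0,y0)"
          hence "(x',y0) \<in> F" "c' (x',y0) = \<alpha>" using xy' ne eq c'new e by auto
          thus False using main by blast
        next
          assume a: "(x',y) = (x0,y0)"
          hence "(x,y0) \<in> F" "c' (x,y0) = \<alpha>" using xy ne eq c'new e by auto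
          thus False using main by blast
        qed
      next
        case False
        hence F: "(x,y) \<in> F" "(x',y) \<in> F" using xy xy' e by auto
        have dif: "c (x,y) \<noteq> c (x',y)" using cY F ne by blast
        have closed: "u \<in> T \<longleftrightarrow> u' \<in> T" if hh: "(u,y) \<in> F" "(u',y) \<in> F" "c (u,y) = \<alpha>" "c (u',y) = \<beta>" for u u'
        proof
          assume "u \<in> T" thus "u' \<in> T" using fwd hh by blast
        next
          assume "u' \<in> T"
          then obtain x'' where x'': "x'' \<in> T" "(x'',y) \<in> F" "c (x'',y) = \<alpha>" using bck hh by blast
          have "x'' = u" using cY hh x'' by metis
          thus "u \<in> T" using x'' by simp
        qed
        show False
        proof (cases "c (x,y) \<in> {\<alpha>,\<beta>} \<and> c (x',y) \<in> {\<alpha>,\<beta>}")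
          case True
          hence "x \<in> T \<longleftrightarrow> x' \<in> T" using closed[of x x'] closed[of x' x] F dif by auto
          thus False
          proof (cases "x \<in> T")
            case True
            thus False using \<open>x \<in> T \<longleftrightarrow> x' \<in> T\<close> c'sw F eq dif swinj \<open>c (x,y) \<in> _ \<and> _\<close> by metis
          next
            case False
            thus False using \<open>x \<in> T \<longleftrightarrow> x' \<in> T\<close> c'old F eq dif by metis
          qed
        next
          case False
          show False
          proof (cases "c (x,y) \<in> {\<alpha>,\<beta>}")
            case True
            hence "c (x',y) \<notin> {\<alpha>,\<beta>}" using False by blast
            thus False using c'sw c'old F eq swin True by metis
          next
            case False
            thus False using c'sw c'old F eq swin dif by metis
          qed
        qed
      qed
    qed
  qed
qed



lemma path_edges_Nil[simp]: "path_edges [] = {}"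
  by (simp add: path_edges_def)
lemma path_edges_single[simp]: "path_edges [x] = {}"
  by (simp add: path_edges_def)
lemma path_edges_Cons2[simp]: "path_edges (x # y # zs) = insert {x,y} (path_edges (y # zs))"
proof -
  have "path_edges (x # y # zs) = {{(x#y#zs) ! i, (x#y#zs) ! Suc i} | i. Suc i < length (x#y#zs)}"
    by (simp add: path_edges_def)
  also have "\<dots> = insert {x,y} {{(y#zs) ! i, (y#zs) ! Suc i} | i. Suc i < length (y#zs)}"
  proof (intro set_eqI iffI)
    fix e assume "e \<in> {{(x#y#zs) ! i, (x#y#zs) ! Suc i} | i. Suc i < length (x#y#zs)}"
    then obtain i where "e = {(x#y#zs) ! i, (x#y#zs) ! Suc i}" "Suc i < length (x#y#zs)" by blast
    thus "e \<in> insert {x,y} {{(y#zs) ! i, (y#zs) ! Suc i} | i. Suc i < length (y#zs)}"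
      by (cases i) auto
  next
    fix e assume "e \<in> insert {x,y} {{(y#zs) ! i, (y#zs) ! Suc i} | i. Suc i < length (y#zs)}"
    thus "e \<in> {{(x#y#zs) ! i, (x#y#zs) ! Suc i} | i. Suc i < length (x#y#zs)}"
    proof
      assume "e = {x,y}" thus ?thesis by (intro CollectI exI[of _ 0]) auto
    next
      assume "e \<in> {{(y#zs) ! i, (y#zs) ! Suc i} | i. Suc i < length (y#zs)}"
      then obtain i where "e = {(y#zs) ! i, (y#zs) ! Suc i}" "Suc i < length (y#zs)" by blast
      thus ?thesis by (intro CollectI exI[of _ "Suc i"]) auto
    qed
  qed
  also have "\<dots> = insert {x,y} (path_edges (y # zs))" by (simp add: path_edges_def)
  finally show ?thesis .
qed

lemma avail_col_aux:
  assumes "finite S" "finite U" "card S < card U"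
  shows "\<exists>u\<in>U. u \<notin> f ` S"
proof (rule ccontr)
  assume "\<not> ?thesis"
  hence "U \<subseteq> f ` S" by auto
  hence "card U \<le> card (f ` S)" using assms by (simp add: card_mono)
  also have "\<dots> \<le> card S" by (rule card_image_le[OF assms(1)])
  finally show False using assms(3) by simp
qed

lemma greedy_col:
  fixes X :: "'b set" and conf :: "'b \<Rightarrow> 'b \<Rightarrow> bool"
  assumes "finite X" "\<forall>x\<in>X. card {y\<in>X. y \<noteq> x \<and> conf x y} < m" "\<forall>x y. conf x y \<longrightarrow> conf y x"
  shows "\<exists>c. (\<forall>x\<in>X. c x < m) \<and> (\<forall>x\<in>X. \<forall>y\<in>X. x \<noteq> y \<and> conf x y \<longrightarrow> c x \<noteq> c y)"
  using assms
proof (induction X rule: finite_induct)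
  case empty thus ?case by simp
next
  case (insert x X)
  have "\<forall>z\<in>X. card {y\<in>X. y \<noteq> z \<and> conf z y} < m"
  proof
    fix z assume "z \<in> X"
    have "card {y\<in>X. y \<noteq> z \<and> conf z y} \<le> card {y\<in>insert x X. y \<noteq> z \<and> conf z y}"
      by (rule card_mono) (use insert in auto)
    thus "card {y\<in>X. y \<noteq> z \<and> conf z y} < m" using insert.prems(1) \<open>z \<in> X\<close> by fastforce
  qed
  then obtain c where c1: "\<forall>x\<in>X. c x < m" and c2: "\<forall>x\<in>X. \<forall>y\<in>X. x \<noteq> y \<and> conf x y \<longrightarrow> c x \<noteq> c y"
    using insert by blast
  define S where "S = {y\<in>X. y \<noteq> x \<and> conf x y}"
  have "card S \<le> card {y\<in>insert x X. y \<noteq> x \<and> conf x y}" unfolding S_def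
    by (rule card_mono) (use insert in auto)
  hence "card S < card {0..<m}" using insert.prems(1) by fastforce
  then obtain k where k: "k \<in> {0..<m}" "k \<notin> c ` S"
    using avail_col_aux[of S "{0..<m}" c] insert(1) unfolding S_def by auto
  show ?case
    apply (rule exI[of _ "c(x := k)"])
    using c1 c2 k insert(2) insert.prems(2) unfolding S_def by auto
qed

lemma lf_struct:
  fixes F :: "'a set set" and A B :: "'a set"
  assumes fin: "finite F"
    and edges: "\<forall>e\<in>F. \<exists>u v. e = {u,v} \<and> u \<noteq> v \<and> u \<in> A \<union> B \<and> v \<in> A \<union> B"
    and disj: "A \<inter> B = {}"
    and indep: "\<forall>u\<in>A. \<forall>v\<in>A. {u,v} \<notin> F"
    and PA: "\<forall>a\<in>A. \<forall>x y. {a,x}\<in>F \<longrightarrow> {a,y}\<in>F \<longrightarrow> x = y"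
    and PB1: "\<forall>b\<in>B. \<forall>x y. x\<in>B \<longrightarrow> y\<in>B \<longrightarrow> {x,b}\<in>F \<longrightarrow> {y,b}\<in>F \<longrightarrow> x = y"
    and PB2: "\<forall>b\<in>B. \<forall>x y z. {x,b}\<in>F \<longrightarrow> {y,b}\<in>F \<longrightarrow> {z,b}\<in>F \<longrightarrow> x = y \<or> x = z \<or> y = z"
  shows "linear_forest F"
proof -
  define NA where "NA b = {x\<in>A. {x,b}\<in>F}" for b
  have NAcases: "NA b = {} \<or> (\<exists>x. NA b = {x}) \<or> (\<exists>x y. x \<noteq> y \<and> NA b = {x,y})" if "b \<in> B" for b
  proof (cases "NA b = {}")
    case False
    then obtain x where x: "x \<in> NA b" by blast
    show ?thesis
    proof (cases "NA b - {x} = {}")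
      case True thus ?thesis using x by blast
    next
      case False
      then obtain y where y: "y \<in> NA b" "y \<noteq> x" by blast
      have "NA b = {x,y}"
      proof (intro set_eqI iffI)
        fix z assume "z \<in> NA b"
        thus "z \<in> {x,y}" using PB2 that x y unfolding NA_def by blast
      qed (use x y in auto)
      thus ?thesis using y by blast
    qed
  qed simp
  have NAcases1: "NA b = {} \<or> (\<exists>x. NA b = {x})" if "b \<in> B" "w \<in> B" "{w,b} \<in> F" for b w
  proof -
    have "False" if "x \<noteq> y" "NA b = {x,y}" for x y
    proof -
      have "x \<in> A" "y \<in> A" "{x,b} \<in> F" "{y,b} \<in> F" using that unfolding NA_def by auto
      moreover have "w \<noteq> x" "w \<noteq> y" using \<open>w \<in> B\<close> calculation disj by auto
      ultimately show False using PB2 \<open>b \<in> B\<close> \<open>{w,b} \<in> F\<close> \<open>x \<noteq> y\<close> by blast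
    qed
    thus ?thesis using NAcases[OF \<open>b \<in> B\<close>] by blast
  qed
  have NAA: "NA b \<subseteq> A" for b unfolding NA_def by auto
  have NAF: "x \<in> NA b \<Longrightarrow> {x,b} \<in> F" for x b unfolding NA_def by auto
  define Pb where "Pb b p \<longleftrightarrow> distinct p \<and> set p = insert b (NA b) \<and> path_edges p = (\<lambda>x. {x,b}) ` NA b" for b p
  have Pb_ex: "\<exists>p. Pb b p" if "b \<in> B" for b
  proof -
    have bn: "b \<notin> NA b" using NAA that disj by blast
    from NAcases[OF that] show ?thesis
    proof (elim disjE exE conjE)
      assume "NA b = {}" thus ?thesis by (intro exI[of _ "[b]"]) (simp add: Pb_def)
    next
      fix x assume h: "NA b = {x}"
      have c: "{x,b} = {b,x}" by blast
      have "Pb b [x,b]" unfolding Pb_def using h bn by (simp only: Pb_def distinct.simps list.set path_edges_Cons2 path_edges_single) auto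
      thus ?thesis by blast
    next
      fix x y assume h: "x \<noteq> y" "NA b = {x,y}"
      have c: "{b,y} = {y,b}" by blast
      have "Pb b [x,b,y]" unfolding Pb_def using h bn by (simp only: Pb_def distinct.simps list.set path_edges_Cons2 path_edges_single) auto
      thus ?thesis by blast
    qed
  qed
  define Pe where "Pe e p \<longleftrightarrow> (\<exists>u v. e = {u,v} \<and> u \<noteq> v \<and> u \<in> B \<and> v \<in> B \<and> distinct p \<and>
      set p = {u,v} \<union> NA u \<union> NA v \<and>
      path_edges p = insert {u,v} ((\<lambda>x. {x,u}) ` NA u \<union> (\<lambda>x. {x,v}) ` NA v))" for e p
  have Pe_ex: "\<exists>p. Pe e p" if hyp: "e \<in> F" "e \<subseteq> B" for e
  proof -
    obtain u v where uv: "e = {u,v}" "u \<noteq> v" "u \<in> B" "v \<in> B" using edges hyp by auto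
    have nu: "u \<notin> NA u" "u \<notin> NA v" "v \<notin> NA u" "v \<notin> NA v" using NAA uv disj by blast+
    have dj: "NA u \<inter> NA v = {}" using PA NAA NAF uv(2) by blast
    have "{v,u} \<in> F" using uv hyp by (simp add: insert_commute)
    hence c1: "NA u = {} \<or> (\<exists>x. NA u = {x})" using NAcases1[of u v] uv by blast
    have c2: "NA v = {} \<or> (\<exists>x. NA v = {x})" using NAcases1[of v u] uv hyp by blast
    have "\<exists>p. distinct p \<and> set p = {u,v} \<union> NA u \<union> NA v \<and>
      path_edges p = insert {u,v} ((\<lambda>x. {x,u}) ` NA u \<union> (\<lambda>x. {x,v}) ` NA v)"
      using c1 c2
    proof (elim disjE exE)
      assume h: "NA u = {}" "NA v = {}"
      show ?thesis using uv h by (intro exI[of _ "[u,v]"]) simp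
    next
      fix y assume h: "NA u = {}" "NA v = {y}"
      have c: "{v,y} = {y,v}" by blast
      show ?thesis using uv h nu by (intro exI[of _ "[u,v,y]"] conjI; simp only: distinct.simps list.set path_edges_Cons2 path_edges_single; auto)
    next
      fix x assume h: "NA u = {x}" "NA v = {}"
      show ?thesis using uv h nu by (intro exI[of _ "[x,u,v]"] conjI; simp only: distinct.simps list.set path_edges_Cons2 path_edges_single; auto)
    next
      fix x y assume h: "NA u = {x}" "NA v = {y}"
      have c: "{v,y} = {y,v}" by blast
      have "x \<noteq> y" using dj h by blast
      thus ?thesis using uv h nu by (intro exI[of _ "[x,u,v,y]"] conjI; simp only: distinct.simps list.set path_edges_Cons2 path_edges_single; auto)
    qed
    then obtain p where p: "distinct p \<and> set p = {u,v} \<union> NA u \<union> NA v \<and>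
      path_edges p = insert {u,v} ((\<lambda>x. {x,u}) ` NA u \<union> (\<lambda>x. {x,v}) ` NA v)" ..
    have "Pe e p" unfolding Pe_def
      by (rule exI[of _ u], rule exI[of _ v]) (simp add: uv p)
    thus ?thesis ..
  qed
  define B0 where "B0 = {b\<in>B. (\<exists>e\<in>F. b \<in> e) \<and> \<not>(\<exists>w\<in>B. {w,b}\<in>F)}"
  define FB where "FB = {e\<in>F. e \<subseteq> B}"
  define pb where "pb b = (SOME p. Pb b p)" for b
  define pe where "pe e = (SOME p. Pe e p)" for e
  have pbP: "Pb b (pb b)" if "b \<in> B" for b unfolding pb_def using Pb_ex[OF that] by (rule someI_ex)
  have peP: "Pe e (pe e)" if hyp: "e \<in> FB" for e
  proof -
    have "e \<in> F" "e \<subseteq> B" using hyp by (simp_all add: FB_def)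
    hence "\<exists>p. Pe e p" by (rule Pe_ex)
    thus ?thesis unfolding pe_def by (rule someI_ex)
  qed
  define Ps where "Ps = pb ` B0 \<union> pe ` FB"
  have finU: "finite (\<Union>F)"
  proof (rule finite_Union[OF fin])
    fix e assume "e \<in> F"
    then obtain u v where "e = {u,v}" using edges by blast
    thus "finite e" by simp
  qed
  have finPs: "finite Ps" unfolding Ps_def
  proof (intro finite_UnI finite_imageI)
    show "finite B0" by (rule finite_subset[OF _ finU]) (auto simp: B0_def)
    show "finite FB" using fin by (simp add: FB_def)
  qed
  have distPs: "\<forall>p\<in>Ps. distinct p"
  proof
    fix p assume "p \<in> Ps"
    hence "(\<exists>b\<in>B0. p = pb b) \<or> (\<exists>e\<in>FB. p = pe e)" unfolding Ps_def by blast
    thus "distinct p"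
    proof (elim disjE bexE)
      fix b assume "b \<in> B0" "p = pb b"
      hence "b \<in> B" by (simp add: B0_def)
      thus "distinct p" using pbP[of b] \<open>p = pb b\<close> unfolding Pb_def by simp
    next
      fix e assume "e \<in> FB" "p = pe e"
      thus "distinct p" using peP[of e] unfolding Pe_def by auto
    qed
  qed
  have FBo: "\<exists>r. r \<in> B \<and> r \<noteq> w \<and> e = {r,w}" if hyp: "e \<in> FB" "w \<in> e" for e w
  proof -
    obtain u v where uv: "e = {u,v}" "u \<noteq> v" using edges hyp FB_def by auto
    have eB: "e \<subseteq> B" using hyp FB_def by auto
    show ?thesis
    proof (cases "w = u")
      case True
      have "v \<in> B" "v \<noteq> w" "e = {v,w}" using uv eB True by (auto simp: insert_commute)
      thus ?thesis by blast
    next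
      case False
      hence "w = v" using hyp(2) uv by simp
      have "u \<in> B" "u \<noteq> w" "e = {u,w}" using uv eB \<open>w = v\<close> by auto
      thus ?thesis by blast
    qed
  qed
  have FBeq: "e = e'" if hyp: "e \<in> FB" "e' \<in> FB" "w \<in> e" "w \<in> e'" for e e' w
  proof -
    obtain r where o: "r \<in> B" "r \<noteq> w" "e = {r,w}" using FBo hyp by blast
    obtain r' where o': "r' \<in> B" "r' \<noteq> w" "e' = {r',w}" using FBo hyp by blast
    have "w \<in> B" "e \<in> F" "e' \<in> F" using hyp FB_def by auto
    hence "r = r'" using PB1 o o' by blast
    thus ?thesis using o o' by simp
  qed
  have NAdisj: "z \<notin> NA w'" if "w \<noteq> w'" "z \<in> NA w" for z w w'
  proof
    assume "z \<in> NA w'"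
    hence "z \<in> A" "{z,w} \<in> F" "{z,w'} \<in> F" using that by (simp_all add: NA_def)
    hence "w = w'" using PA by blast
    thus False using that by simp
  qed
  have NAB: "b \<notin> NA x" if "b \<in> B" for b x
    using that disj unfolding NA_def by blast
  have D1: "set (pb b) \<inter> set (pb b') = {}" if hyp: "b \<in> B0" "b' \<in> B0" "b \<noteq> b'" for b b'
  proof -
    have bB: "b \<in> B" "b' \<in> B" using hyp B0_def by auto
    hence s1: "set (pb b) = insert b (NA b)" and s2: "set (pb b') = insert b' (NA b')"
      using pbP unfolding Pb_def by auto
    show ?thesis unfolding s1 s2 using NAdisj[OF hyp(3)] NAB[OF bB(1)] NAB[OF bB(2)] hyp(3) by auto
  qed
  have D2: "set (pb b) \<inter> set (pe e) = {}" if hyp: "b \<in> B0" "e \<in> FB" for b e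
  proof -
    have bB: "b \<in> B" using hyp B0_def by auto
    hence sb: "set (pb b) = insert b (NA b)" using pbP Pb_def by auto
    obtain u v where uv: "e = {u,v}" "u \<noteq> v" "u \<in> B" "v \<in> B" "set (pe e) = {u,v} \<union> NA u \<union> NA v"
      using peP[OF hyp(2)] unfolding Pe_def by blast
    have eF: "{u,v} \<in> F" using hyp uv FB_def by auto
    have nb: "\<not>(\<exists>w\<in>B. {w,b}\<in>F)" using hyp(1) B0_def by auto
    have "b \<noteq> u"
    proof
      assume "b = u"
      hence "{v,b} \<in> F" using eF by (simp add: insert_commute)
      thus False using nb uv by blast
    qed
    moreover have "b \<noteq> v"
    proof
      assume "b = v"
      hence "{u,b} \<in> F" using eF by simp
      thus False using nb uv by blast
    qed
    ultimately show ?thesis unfolding sb uv(5)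
      using NAdisj[of b u] NAdisj[of b v] NAB[OF bB] NAB[OF uv(3)] NAB[OF uv(4)] by auto
  qed
  have D3: "set (pe e) \<inter> set (pe e') = {}" if hyp: "e \<in> FB" "e' \<in> FB" "e \<noteq> e'" for e e'
  proof -
    obtain u v where uv: "e = {u,v}" "u \<in> B" "v \<in> B" "set (pe e) = {u,v} \<union> NA u \<union> NA v"
      using peP[OF hyp(1)] unfolding Pe_def by blast
    obtain u' v' where uv': "e' = {u',v'}" "u' \<in> B" "v' \<in> B" "set (pe e') = {u',v'} \<union> NA u' \<union> NA v'"
      using peP[OF hyp(2)] unfolding Pe_def by blast
    have ee: "w \<noteq> w'" if "w \<in> e" "w' \<in> e'" for w w'
    proof
      assume "w = w'"
      hence "e = e'" using FBeq[OF hyp(1,2), of w] that by simp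
      thus False using hyp(3) by simp
    qed
    have m: "u \<in> e" "v \<in> e" "u' \<in> e'" "v' \<in> e'" by (simp_all add: uv uv')
    have d: "u \<noteq> u'" "u \<noteq> v'" "v \<noteq> u'" "v \<noteq> v'"
      using ee[OF m(1) m(3)] ee[OF m(1) m(4)] ee[OF m(2) m(3)] ee[OF m(2) m(4)] by auto
    have False if z1: "z \<in> set (pe e)" and z2: "z \<in> set (pe e')" for z
    proof -
      from z1 have "z = u \<or> z = v \<or> z \<in> NA u \<or> z \<in> NA v" using uv(4) by blast
      moreover from z2 have "z = u' \<or> z = v' \<or> z \<in> NA u' \<or> z \<in> NA v'" using uv'(4) by blast
      ultimately show False
        using NAdisj[OF d(1)] NAdisj[OF d(2)] NAdisj[OF d(3)] NAdisj[OF d(4)]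
          NAB[OF uv(2)] NAB[OF uv(3)] NAB[OF uv'(2)] NAB[OF uv'(3)] d by metis
    qed
    thus ?thesis by blast
  qed
  have disjPs: "\<forall>p\<in>Ps. \<forall>q\<in>Ps. p \<noteq> q \<longrightarrow> set p \<inter> set q = {}"
  proof (intro ballI impI)
    fix p q assume p: "p \<in> Ps" and q: "q \<in> Ps" and pq: "p \<noteq> q"
    from p have P: "(\<exists>b\<in>B0. p = pb b) \<or> (\<exists>e\<in>FB. p = pe e)" unfolding Ps_def by blast
    from q have Q: "(\<exists>b\<in>B0. q = pb b) \<or> (\<exists>e\<in>FB. q = pe e)" unfolding Ps_def by blast
    from P Q show "set p \<inter> set q = {}"
    proof (elim disjE bexE)
      fix b b' assume "b \<in> B0" "p = pb b" "b' \<in> B0" "q = pb b'"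
      thus ?thesis using D1[of b b'] pq by auto
    next
      fix b e assume "b \<in> B0" "p = pb b" "e \<in> FB" "q = pe e"
      thus ?thesis using D2[of b e] by auto
    next
      fix b e assume "e \<in> FB" "p = pe e" "b \<in> B0" "q = pb b"
      thus ?thesis using D2[of b e] by auto
    next
      fix e e' assume "e \<in> FB" "p = pe e" "e' \<in> FB" "q = pe e'"
      thus ?thesis using D3[of e e'] pq by auto
    qed
  qed
  have pbE: "path_edges (pb b) = (\<lambda>x. {x,b}) ` NA b" if "b \<in> B0" for b
  proof -
    have "b \<in> B" using that by (simp add: B0_def)
    thus ?thesis using pbP[of b] unfolding Pb_def by simp
  qed
  have peE: "\<exists>u v. e = {u,v} \<and> path_edges (pe e) = insert {u,v} ((\<lambda>x. {x,u}) ` NA u \<union> (\<lambda>x. {x,v}) ` NA v)"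
    if "e \<in> FB" for e
    using peP[OF that] unfolding Pe_def by blast
  have sub: "path_edges p \<subseteq> F" if hyp: "p \<in> Ps" for p
  proof -
    from hyp have P: "(\<exists>b\<in>B0. p = pb b) \<or> (\<exists>e\<in>FB. p = pe e)" unfolding Ps_def by blast
    thus ?thesis
    proof (elim disjE bexE)
      fix b assume "b \<in> B0" "p = pb b"
      have sf: "(\<lambda>x. {x,b}) ` NA b \<subseteq> F" using NAF by blast
      show ?thesis unfolding \<open>p = pb b\<close> pbE[OF \<open>b \<in> B0\<close>] by (rule sf)
    next
      fix e assume e: "e \<in> FB" "p = pe e"
      obtain u v where uv: "e = {u,v}" "path_edges (pe e) = insert {u,v} ((\<lambda>x. {x,u}) ` NA u \<union> (\<lambda>x. {x,v}) ` NA v)"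
        using peE[OF e(1)] by blast
      have "e \<in> F" using e(1) unfolding FB_def by blast
      hence "{u,v} \<in> F" using uv(1) by simp
      hence sf: "insert {u,v} ((\<lambda>x. {x,u}) ` NA u \<union> (\<lambda>x. {x,v}) ` NA v) \<subseteq> F" using NAF by blast
      show ?thesis unfolding e(2) uv(2) by (rule sf)
    qed
  qed
  have inU: "x \<in> (\<Union>p\<in>Ps. path_edges p)" if "p \<in> Ps" "x \<in> path_edges p" for x p
    using that by blast
  have pbPs: "pb b \<in> Ps" if "b \<in> B0" for b using that unfolding Ps_def by blast
  have pePs: "pe e \<in> Ps" if "e \<in> FB" for e using that unfolding Ps_def by blast
  have cover: "{a,b} \<in> (\<Union>p\<in>Ps. path_edges p)" if hh: "a \<in> A" "b \<in> B" "{a,b} \<in> F" for a b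
  proof -
    have aN: "a \<in> NA b" using hh unfolding NA_def by simp
    show ?thesis
    proof (cases "\<exists>w\<in>B. {w,b}\<in>F")
      case True
      then obtain w where w: "w \<in> B" "{w,b} \<in> F" by blast
      have wFB: "{w,b} \<in> FB" unfolding FB_def using w hh(2) by simp
      obtain u' v' where uv': "{w,b} = {u',v'}" "path_edges (pe {w,b}) = insert {u',v'} ((\<lambda>x. {x,u'}) ` NA u' \<union> (\<lambda>x. {x,v'}) ` NA v')"
        using peE[OF wFB] by blast
      have "b \<in> {w,b}" by simp
      hence "b = u' \<or> b = v'" unfolding uv'(1) by simp
      hence "{a,b} \<in> path_edges (pe {w,b})" unfolding uv'(2) using aN by blast
      thus ?thesis using inU pePs[OF wFB] by blast
    next
      case False
      hence "b \<in> B0" unfolding B0_def using hh by blast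
      hence "{a,b} \<in> path_edges (pb b)" unfolding pbE[OF \<open>b \<in> B0\<close>] using aN by blast
      thus ?thesis using inU pbPs[OF \<open>b \<in> B0\<close>] by blast
    qed
  qed
  have sup: "e \<in> (\<Union>p\<in>Ps. path_edges p)" if hyp0: "e \<in> F" for e
  proof -
    obtain u v where uv: "e = {u,v}" "u \<noteq> v" "u \<in> A \<union> B" "v \<in> A \<union> B" using edges hyp0 by blast
    show ?thesis
    proof (cases "u \<in> B \<and> v \<in> B")
      case True
      hence eFB: "e \<in> FB" unfolding FB_def using uv hyp0 by simp
      obtain u' v' where uv': "e = {u',v'}" "path_edges (pe e) = insert {u',v'} ((\<lambda>x. {x,u'}) ` NA u' \<union> (\<lambda>x. {x,v'}) ` NA v')"
        using peE[OF eFB] by blast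
      have "e \<in> path_edges (pe e)" unfolding uv'(2) using uv'(1) by simp
      thus ?thesis using inU pePs[OF eFB] by blast
    next
      case False
      have nAA: "\<not> (u \<in> A \<and> v \<in> A)" using indep hyp0 uv(1) by blast
      have "(u \<in> A \<and> v \<in> B) \<or> (v \<in> A \<and> u \<in> B)" using False nAA uv(3,4) by blast
      thus ?thesis
      proof
        assume "u \<in> A \<and> v \<in> B" thus ?thesis using cover[of u v] uv(1) hyp0 by simp
      next
        assume h: "v \<in> A \<and> u \<in> B"
        have "e = {v,u}" using uv(1) by (simp add: insert_commute)
        thus ?thesis using cover[of v u] h hyp0 by simp
      qed
    qed
  qed
  have "F = (\<Union>p\<in>Ps. path_edges p)"
  proof
    show "F \<subseteq> (\<Union>p\<in>Ps. path_edges p)" using sup by blast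
    show "(\<Union>p\<in>Ps. path_edges p) \<subseteq> F" using sub by blast
  qed
  thus ?thesis unfolding linear_forest_def using finPs distPs disjPs by blast
qed



theorem lemma3p4:
  fixes V :: "'a set" and E :: "'a set set" and A B :: "'a set"
  assumes "simple_graph V E"
    and "V = A \<union> B" and "A \<inter> B = {}"
    and "\<forall>v\<in>V. real (card (nbrs_in E B v)) \<le> real (max_degree V E) / 100"
    and "independent_set E A"
  shows "lf_decomposable E (nat \<lceil>real (max_degree V E) / 2\<rceil>)"
proof -
  note sg = assms(1) and VAB = assms(2) and disj = assms(3) and nbass = assms(4) and ind = assms(5)
  define d where "d = max_degree V E"
  define k where "k = nat \<lceil>real d / 2\<rceil>"
  define s where "s = d div 100"
  have finV: "finite V" using sg by (simp add: simple_graph_def)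
  have Eedge: "\<forall>e\<in>E. \<exists>u v. e = {u,v} \<and> u \<noteq> v \<and> u \<in> V \<and> v \<in> V"
    using sg by (simp add: simple_graph_def)
  have finE: "finite E"
  proof (rule finite_subset[OF _ finite_Pow_iff[THEN iffD2, OF finV]])
    show "E \<subseteq> Pow V"
    proof
      fix e assume "e \<in> E"
      then obtain u v where "e = {u,v}" "u \<in> V" "v \<in> V" using Eedge by blast
      thus "e \<in> Pow V" by simp
    qed
  qed
  have dk: "d \<le> 2 * k"
  proof -
    have "real d / 2 \<le> of_int \<lceil>real d / 2\<rceil>" by (rule le_of_int_ceiling)
    moreover have "\<lceil>real d / 2\<rceil> \<ge> 0" by simp
    ultimately have "real d / 2 \<le> real k" unfolding k_def by simp
    thus ?thesis by linarith
  qed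
  have sk: "3 * s \<le> k" using dk unfolding s_def by linarith
  have nbB: "card (nbrs_in E B v) \<le> s" if "v \<in> V" for v
  proof -
    have "real (card (nbrs_in E B v)) \<le> real d / 100" using nbass that d_def by simp
    hence "card (nbrs_in E B v) * 100 \<le> d" by linarith
    thus ?thesis unfolding s_def by (simp add: less_eq_div_iff_mult_less_eq)
  qed
  have degle: "degree E v \<le> d" if "v \<in> V" for v
    unfolding d_def max_degree_def using finV that by (intro Max_ge) auto
  define Nb where "Nb v = {u. {u,v} \<in> E}" for v
  have nbrs_eq: "nbrs_in E S v = Nb v \<inter> S" for S v unfolding nbrs_in_def Nb_def by auto
  have NbV: "Nb v \<subseteq> V" for v
  proof
    fix u assume "u \<in> Nb v"
    hence "{u,v} \<in> E" by (simp add: Nb_def)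
    then obtain x y where xy: "{u,v} = {x,y}" "x \<in> V" "y \<in> V" using Eedge by blast
    have "u \<in> {u,v}" by simp
    hence "u \<in> {x,y}" using xy(1) by simp
    thus "u \<in> V" using xy by auto
  qed
  have finNb: "finite (Nb v)" for v using finite_subset[OF NbV finV] .
  have Nbne: "u \<noteq> v" if "u \<in> Nb v" for u v
  proof
    assume "u = v"
    hence "{v} \<in> E" using that by (simp add: Nb_def)
    then obtain x y where xy: "{v} = {x,y}" "x \<noteq> y" using Eedge by blast
    have "x \<in> {v}" "y \<in> {v}" using xy(1) by simp_all
    thus False using xy(2) by simp
  qed
  have deg_eq: "degree E v = card (Nb v)" for v
  proof -
    have "bij_betw (\<lambda>u. {u,v}) (Nb v) {e\<in>E. v \<in> e}"
    proof (rule bij_betwI')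
      fix x y assume "x \<in> Nb v" "y \<in> Nb v"
      show "({x,v} = {y,v}) = (x = y)" by (metis doubleton_eq_iff)
    next
      fix x assume "x \<in> Nb v" thus "{x,v} \<in> {e\<in>E. v \<in> e}" by (simp add: Nb_def)
    next
      fix e assume "e \<in> {e\<in>E. v \<in> e}"
      hence eE: "e \<in> E" and ve: "v \<in> e" by auto
      then obtain x y where xy: "e = {x,y}" using Eedge by blast
      show "\<exists>u\<in>Nb v. e = {u,v}"
      proof (cases "v = x")
        case True
        hence "e = {y,v}" using xy by (simp add: insert_commute)
        thus ?thesis using eE by (auto simp: Nb_def)
      next
        case False
        hence "v = y" using ve xy by simp
        hence "e = {x,v}" using xy by simp
        thus ?thesis using eE by (auto simp: Nb_def)
      qed
    qed
    thus ?thesis unfolding degree_def by (simp add: bij_betw_same_card)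
  qed
  have NbA: "Nb a \<inter> A = {}" if "a \<in> A" for a
    using ind that unfolding independent_set_def Nb_def by blast
  have degsplit: "card (Nb v) = card (Nb v \<inter> A) + card (Nb v \<inter> B)" for v
  proof -
    have "Nb v = (Nb v \<inter> A) \<union> (Nb v \<inter> B)" using NbV VAB by blast
    hence "card (Nb v) = card ((Nb v \<inter> A) \<union> (Nb v \<inter> B))" by simp
    also have "\<dots> = card (Nb v \<inter> A) + card (Nb v \<inter> B)"
      by (rule card_Un_disjoint) (use finNb disj in auto)
    finally show ?thesis .
  qed
  have NBs: "card (Nb v \<inter> B) \<le> s" if "v \<in> V" for v using nbB[OF that] nbrs_eq by simp
  have degB: "card (Nb b \<inter> A) + card (Nb b \<inter> B) \<le> 2 * k" if "b \<in> B" for b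
    using degle[of b] that VAB deg_eq degsplit dk by simp
  have other: "\<exists>w. f = {w,z} \<and> w \<in> Nb z" if hh: "f \<in> E" "z \<in> f" for f z
  proof -
    obtain x y where xy: "f = {x,y}" using Eedge hh(1) by blast
    show ?thesis
    proof (cases "z = x")
      case True
      have "f = {y,z}" unfolding xy True by (rule insert_commute)
      thus ?thesis using hh(1) unfolding Nb_def by (intro exI[of _ y]) simp
    next
      case False
      hence "z = y" using hh(2) xy by simp
      hence "f = {x,z}" using xy by (simp only:)
      thus ?thesis using hh(1) unfolding Nb_def by (intro exI[of _ x]) simp
    qed
  qed
  define EB where "EB = {e\<in>E. e \<subseteq> B}"
  have EBfin: "finite EB" using finE unfolding EB_def by simp
  have EBconf: "\<forall>e\<in>EB. card {f\<in>EB. f \<noteq> e \<and> e \<inter> f \<noteq> {}} < 2 * s"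
  proof
    fix e assume e: "e \<in> EB"
    hence eE: "e \<in> E" and eB: "e \<subseteq> B" by (simp_all add: EB_def)
    obtain u v where uv: "e = {u,v}" "u \<noteq> v" using Eedge eE by blast
    have uB: "u \<in> B" "v \<in> B" using uv eB by auto
    have "v \<in> Nb u" using eE uv(1) by (simp add: Nb_def insert_commute)
    hence vNu: "v \<in> Nb u \<inter> B" using uB by simp
    have "u \<in> Nb v" using eE uv(1) by (simp add: Nb_def)
    hence uNv: "u \<in> Nb v \<inter> B" using uB by simp
    have uV: "u \<in> V" "v \<in> V" using uB VAB by auto
    have sub: "{f\<in>EB. f \<noteq> e \<and> e \<inter> f \<noteq> {}} \<subseteq>
        (\<lambda>w. {w,u}) ` (Nb u \<inter> B - {v}) \<union> (\<lambda>w. {w,v}) ` (Nb v \<inter> B - {u})"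
    proof
      fix f assume "f \<in> {f\<in>EB. f \<noteq> e \<and> e \<inter> f \<noteq> {}}"
      hence fEB: "f \<in> EB" and fne: "f \<noteq> e" and int: "e \<inter> f \<noteq> {}" by auto
      hence fE: "f \<in> E" and fB: "f \<subseteq> B" by (simp_all add: EB_def)
      from int obtain z where z: "z \<in> e" "z \<in> f" by blast
      then obtain w where w: "f = {w,z}" "w \<in> Nb z" using other fE by blast
      have wB: "w \<in> B" using w(1) fB by simp
      show "f \<in> (\<lambda>w. {w,u}) ` (Nb u \<inter> B - {v}) \<union> (\<lambda>w. {w,v}) ` (Nb v \<inter> B - {u})"
      proof (cases "z = u")
        case True
        have "w \<noteq> v"
        proof
          assume "w = v"
          hence "f = {v,u}" using w(1) True by simp
          hence "f = e" using uv(1) by (simp add: insert_commute)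
          thus False using fne by simp
        qed
        thus ?thesis using w wB True by blast
      next
        case False
        hence "z = v" using z(1) uv(1) by simp
        have "w \<noteq> u"
        proof
          assume "w = u"
          hence "f = e" using w(1) \<open>z = v\<close> uv(1) by simp
          thus False using fne by simp
        qed
        thus ?thesis using w wB \<open>z = v\<close> by blast
      qed
    qed
    have "card {f\<in>EB. f \<noteq> e \<and> e \<inter> f \<noteq> {}} \<le>
        card ((\<lambda>w. {w,u}) ` (Nb u \<inter> B - {v}) \<union> (\<lambda>w. {w,v}) ` (Nb v \<inter> B - {u}))"
      by (rule card_mono[OF _ sub]) (simp add: finNb)
    also have "\<dots> \<le> card ((\<lambda>w. {w,u}) ` (Nb u \<inter> B - {v})) + card ((\<lambda>w. {w,v}) ` (Nb v \<inter> B - {u}))"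
      by (rule card_Un_le)
    also have "\<dots> \<le> card (Nb u \<inter> B - {v}) + card (Nb v \<inter> B - {u})"
      by (intro add_mono card_image_le) (simp_all add: finNb)
    also have "\<dots> = (card (Nb u \<inter> B) - 1) + (card (Nb v \<inter> B) - 1)"
      using vNu uNv by (simp add: finNb)
    also have "\<dots> < 2 * s"
    proof -
      have "card (Nb u \<inter> B) \<ge> 1" using vNu finNb by (metis card_0_eq empty_iff finite_Int less_one not_le)
      thus ?thesis using NBs[OF uV(1)] NBs[OF uV(2)] by linarith
    qed
    finally show "card {f\<in>EB. f \<noteq> e \<and> e \<inter> f \<noteq> {}} < 2 * s" .
  qed
  obtain cB where cB1: "\<forall>e\<in>EB. cB e < 2 * s"
    and cB2: "\<forall>e\<in>EB. \<forall>f\<in>EB. e \<noteq> f \<and> e \<inter> f \<noteq> {} \<longrightarrow> cB e \<noteq> cB f"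
    using greedy_col[OF EBfin EBconf] by (metis inf_commute)
  define P where "P b = cB ` {e\<in>EB. b \<in> e}" for b
  have Psub: "P b \<subseteq> {0..<2*s}" for b using cB1 unfolding P_def by auto
  have Pcard: "card (P b) \<le> card (Nb b \<inter> B)" for b
  proof -
    have sub: "{e\<in>EB. b \<in> e} \<subseteq> (\<lambda>w. {w,b}) ` (Nb b \<inter> B)"
    proof
      fix e assume "e \<in> {e\<in>EB. b \<in> e}"
      hence eE: "e \<in> E" and eB: "e \<subseteq> B" and be: "b \<in> e" by (auto simp: EB_def)
      obtain w where w: "e = {w,b}" "w \<in> Nb b" using other[OF eE be] by blast
      have "w \<in> B" using w(1) eB by simp
      thus "e \<in> (\<lambda>w. {w,b}) ` (Nb b \<inter> B)" using w by blast
    qed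
    have "card (P b) \<le> card {e\<in>EB. b \<in> e}" unfolding P_def
      by (rule card_image_le) (simp add: EBfin)
    also have "\<dots> \<le> card ((\<lambda>w. {w,b}) ` (Nb b \<inter> B))"
      by (rule card_mono[OF _ sub]) (simp add: finNb)
    also have "\<dots> \<le> card (Nb b \<inter> B)" by (rule card_image_le) (simp add: finNb)
    finally show ?thesis .
  qed
  define NA where "NA b = Nb b \<inter> A" for b
  have finNA: "finite (NA b)" for b unfolding NA_def using finNb by simp
  define m1 where "m1 b = min (card (NA b)) (k - card (Nb b \<inter> B))" for b
  define S1 where "S1 b = (SOME T. T \<subseteq> NA b \<and> card T = m1 b)" for b
  have S1: "S1 b \<subseteq> NA b \<and> card (S1 b) = m1 b" for b
  proof -
    have "m1 b \<le> card (NA b)" unfolding m1_def by simp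
    then obtain T where "T \<subseteq> NA b" "card T = m1 b" by (rule obtain_subset_with_card_n)
    hence "\<exists>T. T \<subseteq> NA b \<and> card T = m1 b" by blast
    thus ?thesis unfolding S1_def by (rule someI_ex)
  qed
  define F where "F = (\<lambda>(b,a). ((b, a \<in> S1 b), a)) ` {(b,a). b \<in> B \<and> a \<in> A \<and> {a,b} \<in> E}"
  have memF: "((x,j),a) \<in> F \<longleftrightarrow> x \<in> B \<and> a \<in> A \<and> {a,x} \<in> E \<and> j = (a \<in> S1 x)" for x j a
    unfolding F_def by auto
  define L where "L x = (if snd x then {0..<k} - P (fst x) else {0..<k})" for x :: "'a \<times> bool"
  define NN where "NN = {2*s..<k}"
  have finF: "finite F"
  proof -
    have "{(b,a). b \<in> B \<and> a \<in> A \<and> {a,b} \<in> E} \<subseteq> V \<times> V" using VAB by auto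
    hence "finite {(b,a). b \<in> B \<and> a \<in> A \<and> {a,b} \<in> E}" using finV finite_subset by blast
    thus ?thesis unfolding F_def by simp
  qed
  have h1: "\<forall>x. NN \<subseteq> L x"
  proof
    fix x
    show "NN \<subseteq> L x" using Psub[of "fst x"] unfolding NN_def L_def by auto
  qed
  have h2: "\<forall>x. finite (L x)" unfolding L_def by simp
  have h3: "\<forall>x. card {y. (x,y) \<in> F} \<le> card (L x)"
  proof
    fix x :: "'a \<times> bool"
    obtain b j where x: "x = (b,j)" by force
    show "card {y. (x,y) \<in> F} \<le> card (L x)"
    proof (cases "b \<in> B")
      case False
      hence "{y. (x,y) \<in> F} = {}" using x memF by auto
      thus ?thesis by simp
    next
      case bB: True
      show ?thesis
      proof (cases j)
        case True
        have "{y. (x,y) \<in> F} \<subseteq> S1 b" using x memF True by auto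
        hence "card {y. (x,y) \<in> F} \<le> card (S1 b)"
          by (rule card_mono[rotated]) (meson S1 finNA finite_subset)
        also have "\<dots> \<le> k - card (Nb b \<inter> B)" using S1[of b] unfolding m1_def by simp
        also have "\<dots> \<le> k - card (P b)" using Pcard[of b] by simp
        also have "\<dots> \<le> card ({0..<k} - P b)"
          using diff_card_le_card_Diff[of "P b" "{0..<k}"] Psub[of b] by (simp add: finite_subset)
        finally show ?thesis using x True by (simp add: L_def)
      next
        case False
        have "{y. (x,y) \<in> F} \<subseteq> NA b - S1 b"
          using x memF False VAB unfolding NA_def Nb_def by (auto simp: insert_commute)
        hence "card {y. (x,y) \<in> F} \<le> card (NA b - S1 b)"
          by (rule card_mono[rotated]) (simp add: finNA)
        also have "\<dots> = card (NA b) - card (S1 b)"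
          using S1[of b] finNA by (meson card_Diff_subset finite_subset)
        also have "\<dots> \<le> k" using S1[of b] degB[OF bB] unfolding m1_def NA_def by linarith
        finally show ?thesis using x False by (simp add: L_def)
      qed
    qed
  qed
  have h4: "\<forall>y. card {x. (x,y) \<in> F} \<le> card NN"
  proof
    fix a
    show "card {x. (x,a) \<in> F} \<le> card NN"
    proof (cases "a \<in> A")
      case False
      hence "{x. (x,a) \<in> F} = {}" using memF by auto
      thus ?thesis by (metis card.empty zero_le)
    next
      case True
      have "{x. (x,a) \<in> F} \<subseteq> (\<lambda>b. (b, a \<in> S1 b)) ` (Nb a \<inter> B)"
      proof
        fix x assume "x \<in> {x. (x,a) \<in> F}"
        then obtain b j where bj: "x = (b,j)" "((b,j),a) \<in> F" by (cases x) auto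
        hence "b \<in> B" "{a,b} \<in> E" "j = (a \<in> S1 b)" using memF by auto
        hence "b \<in> Nb a \<inter> B" unfolding Nb_def by (simp add: insert_commute)
        thus "x \<in> (\<lambda>b. (b, a \<in> S1 b)) ` (Nb a \<inter> B)" using bj \<open>j = _\<close> by blast
      qed
      hence "card {x. (x,a) \<in> F} \<le> card ((\<lambda>b. (b, a \<in> S1 b)) ` (Nb a \<inter> B))"
        by (rule card_mono[rotated]) (simp add: finNb)
      also have "\<dots> \<le> card (Nb a \<inter> B)" by (rule card_image_le) (simp add: finNb)
      also have "\<dots> \<le> s" using NBs True VAB by simp
      also have "\<dots> \<le> card NN" unfolding NN_def using sk by simp
      finally show ?thesis .
    qed
  qed
  obtain cH where cHL: "\<forall>x y. (x,y) \<in> F \<longrightarrow> cH (x,y) \<in> L x"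
    and cHX: "\<forall>x y y'. (x,y) \<in> F \<longrightarrow> (x,y') \<in> F \<longrightarrow> cH (x,y) = cH (x,y') \<longrightarrow> y = y'"
    and cHY: "\<forall>x x' y. (x,y) \<in> F \<longrightarrow> (x',y) \<in> F \<longrightarrow> cH (x,y) = cH (x',y) \<longrightarrow> x = x'"
    using bip_list_col[OF finF _ h1 h2 h3 h4] unfolding NN_def by auto
  define col where "col e = (if e \<subseteq> B then cB e else
      (SOME i. \<exists>a b. a \<in> A \<and> b \<in> B \<and> e = {a,b} \<and> i = cH ((b, a \<in> S1 b), a)))" for e
  have colAB: "col {a,b} = cH ((b, a \<in> S1 b), a)" if ab: "a \<in> A" "b \<in> B" for a b
  proof -
    have nB: "\<not> {a,b} \<subseteq> B" using ab disj by auto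
    have uniq: "a' = a \<and> b' = b" if h: "a' \<in> A" "b' \<in> B" "{a,b} = {a',b'}" for a' b'
    proof -
      have "a \<in> {a,b}" "b \<in> {a,b}" by simp_all
      hence "a \<in> {a',b'}" "b \<in> {a',b'}" using h(3) by simp_all
      hence "a = a'" "b = b'" using ab h disj by auto
      thus ?thesis by simp
    qed
    have "(SOME i. \<exists>a' b'. a' \<in> A \<and> b' \<in> B \<and> {a,b} = {a',b'} \<and> i = cH ((b', a' \<in> S1 b'), a'))
        = cH ((b, a \<in> S1 b), a)"
    proof (rule some_equality)
      show "\<exists>a' b'. a' \<in> A \<and> b' \<in> B \<and> {a,b} = {a',b'} \<and> cH ((b, a \<in> S1 b), a) = cH ((b', a' \<in> S1 b'), a')"
        using ab by (intro exI[of _ a] exI[of _ b]) simp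
    next
      fix i assume "\<exists>a' b'. a' \<in> A \<and> b' \<in> B \<and> {a,b} = {a',b'} \<and> i = cH ((b', a' \<in> S1 b'), a')"
      then obtain a' b' where "a' \<in> A" "b' \<in> B" "{a,b} = {a',b'}" "i = cH ((b', a' \<in> S1 b'), a')" by blast
      moreover have "a' = a \<and> b' = b" using uniq calculation by blast
      ultimately show "i = cH ((b, a \<in> S1 b), a)" by simp
    qed
    moreover have "col {a,b} = (SOME i. \<exists>a' b'. a' \<in> A \<and> b' \<in> B \<and> {a,b} = {a',b'} \<and> i = cH ((b', a' \<in> S1 b'), a'))"
      unfolding col_def by (rule if_not_P[OF nB])
    ultimately show ?thesis by simp
  qed
  have colBB: "col e = cB e" if "e \<subseteq> B" for e using that unfolding col_def by simp
  have edgeAB: "\<exists>a b. a \<in> A \<and> b \<in> B \<and> e = {a,b}" if h: "e \<in> E" "\<not> e \<subseteq> B" for e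
  proof -
    obtain u v where uv: "e = {u,v}" "u \<in> V" "v \<in> V" using Eedge h(1) by blast
    have nAA: "\<not> (u \<in> A \<and> v \<in> A)" using ind h(1) uv(1) unfolding independent_set_def by blast
    have "\<not> (u \<in> B \<and> v \<in> B)" using h(2) uv(1) by simp
    hence "(u \<in> A \<and> v \<in> B) \<or> (v \<in> A \<and> u \<in> B)" using nAA uv VAB by blast
    thus ?thesis
    proof
      assume "u \<in> A \<and> v \<in> B" thus ?thesis using uv(1) by blast
    next
      assume "v \<in> A \<and> u \<in> B"
      moreover have "e = {v,u}" using uv(1) by (simp add: insert_commute)
      ultimately show ?thesis by blast
    qed
  qed
  have colk: "col e < k" if eE: "e \<in> E" for e
  proof (cases "e \<subseteq> B")
    case True
    hence "e \<in> EB" using eE EB_def by simp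
    thus ?thesis using colBB[OF True] cB1 sk by fastforce
  next
    case False
    then obtain a b where ab: "a \<in> A" "b \<in> B" "e = {a,b}" using edgeAB eE by blast
    have "((b, a \<in> S1 b), a) \<in> F" using memF ab eE by simp
    hence "cH ((b, a \<in> S1 b), a) \<in> L (b, a \<in> S1 b)" using cHL by blast
    hence "cH ((b, a \<in> S1 b), a) < k" unfolding L_def by (auto split: if_splits)
    thus ?thesis using colAB[OF ab(1,2)] ab(3) by simp
  qed
  have lfk: "linear_forest {e\<in>E. col e = i}" if ik: "i < k" for i
  proof -
    define Fi where "Fi = {e\<in>E. col e = i}"
    have fin: "finite Fi" using finE unfolding Fi_def by simp
    have edges: "\<forall>e\<in>Fi. \<exists>u v. e = {u,v} \<and> u \<noteq> v \<and> u \<in> A \<union> B \<and> v \<in> A \<union> B"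
    proof
      fix e assume "e \<in> Fi"
      hence "e \<in> E" unfolding Fi_def by simp
      then obtain u v where "e = {u,v}" "u \<noteq> v" "u \<in> V" "v \<in> V" using Eedge by blast
      thus "\<exists>u v. e = {u,v} \<and> u \<noteq> v \<and> u \<in> A \<union> B \<and> v \<in> A \<union> B" using VAB by blast
    qed
    have indepF: "\<forall>u\<in>A. \<forall>v\<in>A. {u,v} \<notin> Fi" using ind unfolding independent_set_def Fi_def by blast
    have nbBx: "x \<in> B" if h: "a \<in> A" "{a,x} \<in> E" for a x
    proof -
      have "x \<in> Nb a" using h(2) unfolding Nb_def by (simp add: insert_commute)
      hence "x \<in> V" "x \<notin> A" using NbV NbA[OF h(1)] by auto
      thus ?thesis using VAB by simp
    qed
    have PA: "\<forall>a\<in>A. \<forall>x y. {a,x}\<in>Fi \<longrightarrow> {a,y}\<in>Fi \<longrightarrow> x = y"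
    proof (intro ballI allI impI)
      fix a x y assume a: "a \<in> A" and x: "{a,x} \<in> Fi" and y: "{a,y} \<in> Fi"
      have xE: "{a,x} \<in> E" "col {a,x} = i" using x Fi_def by auto
      have yE: "{a,y} \<in> E" "col {a,y} = i" using y Fi_def by auto
      have xB: "x \<in> B" using nbBx[OF a xE(1)] .
      have yB: "y \<in> B" using nbBx[OF a yE(1)] .
      have "{x,a} \<in> E" "{y,a} \<in> E" using xE yE by (simp_all add: insert_commute)
      hence inF: "((x, a \<in> S1 x), a) \<in> F" "((y, a \<in> S1 y), a) \<in> F" using memF a xB yB
        by (simp_all add: insert_commute)
      have "cH ((x, a \<in> S1 x), a) = i" using colAB[OF a xB] xE(2) by simp
      moreover have "cH ((y, a \<in> S1 y), a) = i" using colAB[OF a yB] yE(2) by simp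
      ultimately have "(x, a \<in> S1 x) = (y, a \<in> S1 y)" using cHY inF by metis
      thus "x = y" by simp
    qed
    have PB1: "\<forall>b\<in>B. \<forall>x y. x\<in>B \<longrightarrow> y\<in>B \<longrightarrow> {x,b}\<in>Fi \<longrightarrow> {y,b}\<in>Fi \<longrightarrow> x = y"
    proof (intro ballI allI impI)
      fix b x y assume b: "b \<in> B" and xB: "x \<in> B" and yB: "y \<in> B" and x: "{x,b} \<in> Fi" and y: "{y,b} \<in> Fi"
      have xEB: "{x,b} \<in> EB" using x xB b unfolding Fi_def EB_def by simp
      have yEB: "{y,b} \<in> EB" using y yB b unfolding Fi_def EB_def by simp
      have "cB {x,b} = i" using x colBB[of "{x,b}"] xB b unfolding Fi_def by simp
      moreover have "cB {y,b} = i" using y colBB[of "{y,b}"] yB b unfolding Fi_def by simp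
      moreover have "{x,b} \<inter> {y,b} \<noteq> {}" by simp
      ultimately have eq: "{x,b} = {y,b}" using cB2 xEB yEB by metis
      have "x \<in> {x,b}" by simp
      hence "x \<in> {y,b}" using eq by simp
      hence "x = y \<or> x = b" by simp
      thus "x = y"
      proof
        assume "x = b"
        have "y \<in> {y,b}" by simp
        hence "y \<in> {x,b}" using eq by simp
        thus "x = y" using \<open>x = b\<close> by simp
      qed
    qed
    have PB2: "\<forall>b\<in>B. \<forall>x y z. {x,b}\<in>Fi \<longrightarrow> {y,b}\<in>Fi \<longrightarrow> {z,b}\<in>Fi \<longrightarrow> x = y \<or> x = z \<or> y = z"
    proof (intro ballI allI impI)
      fix b x y z assume b: "b \<in> B" and nx: "{x,b} \<in> Fi" and ny: "{y,b} \<in> Fi" and nz: "{z,b} \<in> Fi"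
      have Ain: "w \<in> A \<and> ((b, w \<in> S1 b), w) \<in> F \<and> cH ((b, w \<in> S1 b), w) = i"
        if hw: "{w,b} \<in> Fi" "w \<notin> B" for w
      proof -
        have wE: "{w,b} \<in> E" "col {w,b} = i" using hw(1) Fi_def by auto
        have "w \<in> Nb b" using wE(1) by (simp add: Nb_def)
        hence wA: "w \<in> A" using NbV VAB hw(2) by blast
        have "((b, w \<in> S1 b), w) \<in> F" using memF wA b wE(1) by simp
        moreover have "cH ((b, w \<in> S1 b), w) = i" using colAB[OF wA b] wE(2) by simp
        ultimately show ?thesis using wA by simp
      qed
      define cat where "cat w = (if w \<in> B then 0 else if w \<in> S1 b then 1 else (2::nat))" for w
      have same: "w1 = w2" if hw: "{w1,b} \<in> Fi" "{w2,b} \<in> Fi" "cat w1 = cat w2" for w1 w2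
      proof (cases "w1 \<in> B")
        case True
        hence "w2 \<in> B" using hw(3) unfolding cat_def by (auto split: if_splits)
        thus ?thesis using PB1 b True hw(1,2) by blast
      next
        case False
        hence w2B: "w2 \<notin> B" using hw(3) unfolding cat_def by (auto split: if_splits)
        have side: "(w1 \<in> S1 b) = (w2 \<in> S1 b)" using hw(3) False w2B unfolding cat_def by (auto split: if_splits)
        have a1: "((b, w1 \<in> S1 b), w1) \<in> F" "cH ((b, w1 \<in> S1 b), w1) = i" using Ain[OF hw(1) False] by auto
        have a2: "((b, w1 \<in> S1 b), w2) \<in> F" "cH ((b, w1 \<in> S1 b), w2) = i" using Ain[OF hw(2) w2B] side by auto
        show ?thesis using cHX a1 a2 by metis
      qed
      have c01: False if hw: "{w1,b} \<in> Fi" "{w2,b} \<in> Fi" "cat w1 = 0" "cat w2 = 1" for w1 w2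
      proof -
        have w1B: "w1 \<in> B" using hw(3) unfolding cat_def by (auto split: if_splits)
        have w2B: "w2 \<notin> B" "w2 \<in> S1 b" using hw(4) unfolding cat_def by (auto split: if_splits)
        have e1: "{w1,b} \<in> EB" using hw(1) w1B b unfolding Fi_def EB_def by simp
        have "cB {w1,b} = i" using hw(1) colBB[of "{w1,b}"] w1B b unfolding Fi_def by simp
        hence iP: "i \<in> P b" unfolding P_def using e1 by force
        have "((b, True), w2) \<in> F" "cH ((b, True), w2) = i" using Ain[OF hw(2) w2B(1)] w2B(2) by auto
        hence "i \<in> L (b, True)" using cHL by metis
        thus False using iP unfolding L_def by simp
      qed
      have cl: "cat w \<le> 2" for w unfolding cat_def by simp
      show "x = y \<or> x = z \<or> y = z"
      proof (rule ccontr)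
        assume "\<not> (x = y \<or> x = z \<or> y = z)"
        hence d: "cat x \<noteq> cat y" "cat x \<noteq> cat z" "cat y \<noteq> cat z" using same nx ny nz by metis+
        have n: "\<not> (cat x = 0 \<and> cat y = 1)" "\<not> (cat x = 0 \<and> cat z = 1)" "\<not> (cat y = 0 \<and> cat x = 1)"
          "\<not> (cat y = 0 \<and> cat z = 1)" "\<not> (cat z = 0 \<and> cat x = 1)" "\<not> (cat z = 0 \<and> cat y = 1)"
          using c01 nx ny nz by blast+
        show False using d n cl[of x] cl[of y] cl[of z] by arith
      qed
    qed
    have "linear_forest Fi" by (rule lf_struct[OF fin edges disj indepF PA PB1 PB2])
    thus ?thesis unfolding Fi_def .
  qed
  have "lf_decomposable E k" unfolding lf_decomposable_def using colk lfk by blast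
  thus ?thesis unfolding k_def d_def .
qed

end
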